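(* Let $k\ge 2$ be a natural number and $H$ a graph. Then $H\in\mathcal{H}_k$ if and only if every shortcut tree for $H$ (with respect to any length-function on $T\cup H$) has at most $k$ leaves.
   Context: All graphs are finite; parallel edges are allowed, loops are not. A length-function on a graph $G$ is a map $\ell:E(G)\to\mathbb{R}^+$ (strictly positive reals); $\ell(H)=\sum_{e\in E(H)}\ell(e)$ for subgraphs $H$, which carry the restricted length-function. $\mathrm{sd}_G(A)$ is the minimum of $\ell(S)$ over connected subgraphs $S\subseteq G$ with $A\subseteq V(S)$ ($\infty$ if none). $H\subseteq G$ is $k$-geodesic in $G$ if $\mathrm{sd}_H(A)=\mathrm{sd}_G(A)$ for all $A\subseteq V(H)$ with $|A|\le k$, and fully geodesic if it is $k$-geodesic for all $k$. For $k\ge2$, $\mathcal{H}_k$ is the class of all graphs $H$ such that for every graph $G\supseteq H$ and every length-function on $G$ for which $H$ is $k$-geodesic in $G$, $H$ is fully geodesic in $G$. $L(T)$ is the set of leaves of a tree $T$. Shortcut tree: let $H$ be a graph, $T$ a tree, both subgraphs of $T\cup H$, and $\ell$ a length-function on $T\cup H$. Then $T$ is a shortcut tree for $H$ if (SCT1) $V(T)\cap V(H)=L(T)$; (SCT2) $E(T)\cap E(H)=\emptyset$; (SCT3) $\ell(T)<\mathrm{sd}_H(L(T))$; (SCT4) for every proper subset $B\subsetneq L(T)$, $\mathrm{sd}_H(B)\le\mathrm{sd}_T(B)$. *)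

theory Defs
  imports Complex_Main "HOL-Library.Extended_Real"
begin

text \<open>Finite multigraphs (parallel edges allowed, no loops): a vertex set, an edge set,
  and an incidence map sending each edge to its set of two distinct endpoints.\<close>

record ('v, 'e) mgraph =
  verts :: "'v set"
  edges :: "'e set"
  ends  :: "'e \<Rightarrow> 'v set"

definition wf_graph :: "('v, 'e) mgraph \<Rightarrow> bool" where
  "wf_graph G \<longleftrightarrow> finite (verts G) \<and> finite (edges G) \<and>
     (\<forall>e\<in>edges G. \<exists>u v. u \<noteq> v \<and> u \<in> verts G \<and> v \<in> verts G \<and> ends G e = {u, v})"

definition subgraph :: "('v, 'e) mgraph \<Rightarrow> ('v, 'e) mgraph \<Rightarrow> bool" where
  "subgraph S G \<longleftrightarrow> wf_graph S \<and> verts S \<subseteq> verts G \<and> edges S \<subseteq> edges G \<and>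
     (\<forall>e\<in>edges S. ends S e = ends G e)"

definition adj :: "('v, 'e) mgraph \<Rightarrow> 'v \<Rightarrow> 'v \<Rightarrow> bool" where
  "adj G u v \<longleftrightarrow> (\<exists>e\<in>edges G. ends G e = {u, v})"

definition connected_graph :: "('v, 'e) mgraph \<Rightarrow> bool" where
  "connected_graph G \<longleftrightarrow> (\<forall>u\<in>verts G. \<forall>v\<in>verts G. (adj G)\<^sup>*\<^sup>* u v)"

definition delete_edge :: "('v, 'e) mgraph \<Rightarrow> 'e \<Rightarrow> ('v, 'e) mgraph" where
  "delete_edge G e = G\<lparr>edges := edges G - {e}\<rparr>"

text \<open>Acyclic: no edge lies on a cycle, i.e. the endpoints of an edge are never joined
  after deleting that edge (this also excludes pairs of parallel edges).\<close>
definition acyclic_graph :: "('v, 'e) mgraph \<Rightarrow> bool" where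
  "acyclic_graph G \<longleftrightarrow>
     (\<forall>e\<in>edges G. \<forall>u v. ends G e = {u, v} \<longrightarrow> \<not> (adj (delete_edge G e))\<^sup>*\<^sup>* u v)"

definition is_tree :: "('v, 'e) mgraph \<Rightarrow> bool" where
  "is_tree T \<longleftrightarrow> wf_graph T \<and> verts T \<noteq> {} \<and> connected_graph T \<and> acyclic_graph T"

definition degree :: "('v, 'e) mgraph \<Rightarrow> 'v \<Rightarrow> nat" where
  "degree G v = card {e\<in>edges G. v \<in> ends G e}"

definition leaves :: "('v, 'e) mgraph \<Rightarrow> 'v set" where
  "leaves T = {v\<in>verts T. degree T v = 1}"

definition glen :: "('e \<Rightarrow> real) \<Rightarrow> ('v, 'e) mgraph \<Rightarrow> real" where
  "glen l H = (\<Sum>e\<in>edges H. l e)"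

text \<open>Steiner distance; the infimum of the empty set is \<open>\<infinity>\<close>.\<close>
definition sd :: "('v, 'e) mgraph \<Rightarrow> ('e \<Rightarrow> real) \<Rightarrow> 'v set \<Rightarrow> ereal" where
  "sd G l A = (INF S\<in>{S. subgraph S G \<and> connected_graph S \<and> A \<subseteq> verts S}. ereal (glen l S))"

definition length_fun :: "('v, 'e) mgraph \<Rightarrow> ('e \<Rightarrow> real) \<Rightarrow> bool" where
  "length_fun G l \<longleftrightarrow> (\<forall>e\<in>edges G. 0 < l e)"

definition k_geodesic :: "nat \<Rightarrow> ('v, 'e) mgraph \<Rightarrow> ('v, 'e) mgraph \<Rightarrow> ('e \<Rightarrow> real) \<Rightarrow> bool" where
  "k_geodesic k H G l \<longleftrightarrow> (\<forall>A. A \<subseteq> verts H \<and> card A \<le> k \<longrightarrow> sd H l A = sd G l A)"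

definition fully_geodesic :: "('v, 'e) mgraph \<Rightarrow> ('v, 'e) mgraph \<Rightarrow> ('e \<Rightarrow> real) \<Rightarrow> bool" where
  "fully_geodesic H G l \<longleftrightarrow> (\<forall>A. A \<subseteq> verts H \<longrightarrow> sd H l A = sd G l A)"

text \<open>Membership in the class \<open>\<H>_k\<close> (supergraphs range over graphs on the same vertex/edge types).\<close>
definition in_Hk :: "nat \<Rightarrow> ('v, 'e) mgraph \<Rightarrow> bool" where
  "in_Hk k H \<longleftrightarrow> (\<forall>G l. wf_graph G \<and> subgraph H G \<and> length_fun G l \<and> k_geodesic k H G l
        \<longrightarrow> fully_geodesic H G l)"

definition graph_union :: "('v, 'e) mgraph \<Rightarrow> ('v, 'e) mgraph \<Rightarrow> ('v, 'e) mgraph" where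
  "graph_union T H = \<lparr>verts = verts T \<union> verts H, edges = edges T \<union> edges H,
     ends = (\<lambda>e. if e \<in> edges T then ends T e else ends H e)\<rparr>"

definition shortcut_tree :: "('v, 'e) mgraph \<Rightarrow> ('v, 'e) mgraph \<Rightarrow> ('e \<Rightarrow> real) \<Rightarrow> bool" where
  "shortcut_tree T H l \<longleftrightarrow>
     is_tree T \<and> wf_graph H \<and> length_fun (graph_union T H) l \<and>
     verts T \<inter> verts H = leaves T \<and>
     edges T \<inter> edges H = {} \<and>
     ereal (glen l T) < sd H l (leaves T) \<and>
     (\<forall>B. B \<subset> leaves T \<longrightarrow> sd H l B \<le> sd T l B)"

end

theory Submission
  imports Defs
begin


lemma adj_sym: "adj G u v \<Longrightarrow> adj G v u"
  unfolding adj_def by (auto simp: insert_commute)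

lemma reach_sym: "(adj G)\<^sup>*\<^sup>* u v \<Longrightarrow> (adj G)\<^sup>*\<^sup>* v u"
proof (induction rule: rtranclp_induct)
  case base then show ?case by simp
next
  case (step y z) then show ?case
    by (meson adj_sym converse_rtranclp_into_rtranclp)
qed

lemma reach_hom:
  assumes "\<And>x y. adj R x y \<Longrightarrow> f x = f y \<or> adj R' (f x) (f y)"
    and "(adj R)\<^sup>*\<^sup>* x y"
  shows "(adj R')\<^sup>*\<^sup>* (f x) (f y)"
  using assms(2)
proof (induction rule: rtranclp_induct)
  case base then show ?case by simp
next
  case (step y z) then show ?case using assms(1)[of y z]
    by (metis rtranclp.rtrancl_into_rtrancl)
qed

lemma adj_mono: "edges R \<subseteq> edges U \<Longrightarrow> (\<forall>e\<in>edges R. ends R e = ends U e) \<Longrightarrow> adj R x y \<Longrightarrow> adj U x y"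
  unfolding adj_def by auto

lemma reach_mono: "edges R \<subseteq> edges U \<Longrightarrow> (\<forall>e\<in>edges R. ends R e = ends U e) \<Longrightarrow> (adj R)\<^sup>*\<^sup>* x y \<Longrightarrow> (adj U)\<^sup>*\<^sup>* x y"
  using reach_hom[of R id U x y] adj_mono[of R U] by auto

lemma subgraph_trans: "subgraph S H \<Longrightarrow> subgraph H G \<Longrightarrow> subgraph S G"
  unfolding subgraph_def by auto

lemma sd_le: "subgraph S G \<Longrightarrow> connected_graph S \<Longrightarrow> A \<subseteq> verts S \<Longrightarrow> sd G l A \<le> ereal (glen l S)"
  unfolding sd_def by (rule INF_lower) auto

lemma sd_ge: "(\<And>S. subgraph S G \<Longrightarrow> connected_graph S \<Longrightarrow> A \<subseteq> verts S \<Longrightarrow> x \<le> ereal (glen l S)) \<Longrightarrow> x \<le> sd G l A"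
  unfolding sd_def by (rule INF_greatest) auto

lemma sd_mono: "subgraph H G \<Longrightarrow> sd G l A \<le> sd H l A"
  by (rule sd_ge, rule sd_le) (auto intro: subgraph_trans)

lemma glen_nonneg: "subgraph S G \<Longrightarrow> length_fun G l \<Longrightarrow> 0 \<le> glen l S"
  unfolding glen_def subgraph_def length_fun_def
  by (intro sum_nonneg) (auto intro: less_imp_le)

lemma glen_mono: "edges S \<subseteq> edges S' \<Longrightarrow> finite (edges S') \<Longrightarrow> (\<forall>e\<in>edges S'. 0 \<le> l e) \<Longrightarrow> glen l S \<le> glen l S'"
  unfolding glen_def by (rule sum_mono2) auto

lemma sd_attained:
  assumes "wf_graph G" "sd G l A \<noteq> \<infinity>"
  shows "\<exists>S. subgraph S G \<and> connected_graph S \<and> A \<subseteq> verts S \<and> sd G l A = ereal (glen l S)"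
proof -
  let ?C = "{S. subgraph S G \<and> connected_graph S \<and> A \<subseteq> verts S}"
  let ?V = "(\<lambda>S. ereal (glen l S)) ` ?C"
  have "?V \<subseteq> (\<lambda>F. ereal (sum l F)) ` Pow (edges G)"
    unfolding glen_def subgraph_def by auto
  moreover have "finite (edges G)" using assms(1) unfolding wf_graph_def by auto
  ultimately have fin: "finite ?V" by (meson finite_Pow_iff finite_imageI finite_subset)
  have ne: "?V \<noteq> {}"
  proof
    assume "?V = {}"
    then have "sd G l A = Inf {}" unfolding sd_def by (simp only:)
    then have "sd G l A = \<infinity>" by (simp add: top_ereal_def)
    then show False using assms(2) by simp
  qed
  have "Inf ?V \<in> ?V" using Min_in[OF fin ne] Min_Inf[OF fin ne] by simp
  then show ?thesis unfolding sd_def by auto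
qed

lemma sd_empty: "sd G l {} \<le> 0"
proof -
  have "subgraph \<lparr>verts = {}, edges = {}, ends = ends G\<rparr> G"
    unfolding subgraph_def wf_graph_def by auto
  moreover have "connected_graph \<lparr>verts = {}, edges = {}, ends = ends G\<rparr>"
    unfolding connected_graph_def by auto
  ultimately show ?thesis using sd_le[of "\<lparr>verts = {}, edges = {}, ends = ends G\<rparr>" G "{}" l]
    by (simp add: glen_def zero_ereal_def)
qed

lemma sd_cong: "(\<forall>e\<in>edges G. l e = l' e) \<Longrightarrow> sd G l A = sd G l' A"
  unfolding sd_def glen_def subgraph_def
  by (intro INF_cong refl) (auto intro!: sum.cong)

definition gcomp :: "('v, 'e) mgraph \<Rightarrow> 'v \<Rightarrow> ('v, 'e) mgraph" where
  "gcomp U r = \<lparr>verts = {v\<in>verts U. (adj U)\<^sup>*\<^sup>* r v},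
     edges = {e\<in>edges U. ends U e \<subseteq> {v\<in>verts U. (adj U)\<^sup>*\<^sup>* r v}}, ends = ends U\<rparr>"

lemma wf_adj: "wf_graph U \<Longrightarrow> adj U x y \<Longrightarrow> x \<in> verts U \<and> y \<in> verts U"
  unfolding wf_graph_def adj_def by (metis doubleton_eq_iff)

lemma comp_reach:
  assumes "wf_graph U" "r \<in> verts U" "(adj U)\<^sup>*\<^sup>* r v"
  shows "(adj (gcomp U r))\<^sup>*\<^sup>* r v"
  using assms(3)
proof (induction rule: rtranclp_induct)
  case base then show ?case by simp
next
  case (step y z)
  from step(2) obtain e where e: "e \<in> edges U" "ends U e = {y, z}" unfolding adj_def by auto
  have "y \<in> verts U" "z \<in> verts U" using wf_adj[OF assms(1) step(2)] by auto
  then have "e \<in> edges (gcomp U r)" using e step(1,2) unfolding gcomp_def by auto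
  then have "adj (gcomp U r) y z" using e unfolding adj_def gcomp_def by auto
  then show ?case using step(3) by auto
qed

lemma comp_props:
  assumes "wf_graph U" "r \<in> verts U"
  shows "subgraph (gcomp U r) U" "connected_graph (gcomp U r)"
    "\<And>v. v \<in> verts U \<Longrightarrow> (adj U)\<^sup>*\<^sup>* r v \<Longrightarrow> v \<in> verts (gcomp U r)"
proof -
  show "subgraph (gcomp U r) U"
    using assms(1) unfolding subgraph_def wf_graph_def gcomp_def
    by (auto 4 4 intro: finite_subset)
  show "connected_graph (gcomp U r)"
    unfolding connected_graph_def
  proof (intro ballI)
    fix u v assume "u \<in> verts (gcomp U r)" "v \<in> verts (gcomp U r)"
    then have "(adj U)\<^sup>*\<^sup>* r u" "(adj U)\<^sup>*\<^sup>* r v" unfolding gcomp_def by auto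
    then have "(adj (gcomp U r))\<^sup>*\<^sup>* r u" "(adj (gcomp U r))\<^sup>*\<^sup>* r v"
      using comp_reach assms by metis+
    then show "(adj (gcomp U r))\<^sup>*\<^sup>* u v" by (meson reach_sym rtranclp_trans)
  qed
  show "\<And>v. v \<in> verts U \<Longrightarrow> (adj U)\<^sup>*\<^sup>* r v \<Longrightarrow> v \<in> verts (gcomp U r)"
    unfolding gcomp_def by auto
qed

lemma wf_ends: "wf_graph X \<Longrightarrow> e \<in> edges X \<Longrightarrow> ends X e \<subseteq> verts X"
  unfolding wf_graph_def by fastforce

lemma wf_ends2: "wf_graph X \<Longrightarrow> e \<in> edges X \<Longrightarrow> \<exists>u v. u \<noteq> v \<and> ends X e = {u, v}"
  unfolding wf_graph_def by fastforce

lemma subgraph_wf: "subgraph S G \<Longrightarrow> wf_graph S"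
  unfolding subgraph_def by auto

lemma subgraph_ends: "subgraph S G \<Longrightarrow> e \<in> edges S \<Longrightarrow> ends S e = ends G e"
  unfolding subgraph_def by auto

lemma subgraph_edges: "subgraph S G \<Longrightarrow> edges S \<subseteq> edges G"
  unfolding subgraph_def by auto

lemma subgraph_verts: "subgraph S G \<Longrightarrow> verts S \<subseteq> verts G"
  unfolding subgraph_def by auto

lemma gu_simps: "verts (graph_union T H) = verts T \<union> verts H"
  "edges (graph_union T H) = edges T \<union> edges H"
  "ends (graph_union T H) e = (if e \<in> edges T then ends T e else ends H e)"
  unfolding graph_union_def by auto

lemma conn_reach: "connected_graph S \<Longrightarrow> u \<in> verts S \<Longrightarrow> v \<in> verts S \<Longrightarrow> (adj S)\<^sup>*\<^sup>* u v"
  unfolding connected_graph_def by auto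

lemma first_step: "(adj S)\<^sup>*\<^sup>* v w \<Longrightarrow> v \<noteq> w \<Longrightarrow> \<exists>e\<in>edges S. v \<in> ends S e"
  by (induction rule: converse_rtranclp_induct) (auto simp: adj_def)

lemma key_forward:
  assumes st: "shortcut_tree T H l" and cardA: "card A < card (leaves T)" and AH: "A \<subseteq> verts H"
  shows "subgraph S (graph_union T H) \<Longrightarrow> connected_graph S \<Longrightarrow> A \<subseteq> verts S \<Longrightarrow> sd H l A \<le> ereal (glen l S)"
proof (induction "card (edges S \<inter> edges T)" arbitrary: S rule: less_induct)
  case (less S)
  define G where "G = graph_union T H"
  have wfT: "wf_graph T" and wfH: "wf_graph H" and lfG: "length_fun G l"
    and VTH: "verts T \<inter> verts H = leaves T" and ETH: "edges T \<inter> edges H = {}"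
    and sct4: "\<And>B. B \<subset> leaves T \<Longrightarrow> sd H l B \<le> sd T l B"
    using st unfolding shortcut_tree_def is_tree_def G_def by auto
  have subS: "subgraph S G" and conS: "connected_graph S" and AS: "A \<subseteq> verts S"
    using less.prems G_def by auto
  have wfS: "wf_graph S" using subS subgraph_wf by auto
  have finH: "finite (verts H)" using wfH unfolding wf_graph_def by auto
  have finT: "finite (verts T)" "finite (edges T)" using wfT unfolding wf_graph_def by auto
  have finS: "finite (edges S)" "finite (verts S)" using wfS unfolding wf_graph_def by auto
  have EG: "edges G = edges T \<union> edges H" and VG: "verts G = verts T \<union> verts H"
    unfolding G_def gu_simps by auto
  have endsT: "\<And>e. e \<in> edges T \<Longrightarrow> ends G e = ends T e" unfolding G_def gu_simps by auto
  have endsH: "\<And>e. e \<in> edges H \<Longrightarrow> ends G e = ends H e" using ETH unfolding G_def gu_simps by auto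
  have ESG: "edges S \<subseteq> edges G" using subS subgraph_edges by auto
  have endsS: "\<And>e. e \<in> edges S \<Longrightarrow> ends S e = ends G e" by (rule subgraph_ends[OF subS])
  have lpos: "\<And>e. e \<in> edges G \<Longrightarrow> 0 < l e" using lfG unfolding length_fun_def by auto
  have glenS0: "0 \<le> glen l S" using glen_nonneg[OF subS lfG] .
  show ?case
  proof (cases "A = {}")
    case True
    then show ?thesis using sd_empty[of H l] glenS0 by (simp add: order_trans)
  next
    case Ane: False
    show ?thesis
    proof (cases "edges S \<inter> edges T = {}")
      case True
      show ?thesis
      proof (cases "verts S \<subseteq> verts H")
        case True
        have "subgraph S H"
          unfolding subgraph_def using wfS True \<open>edges S \<inter> edges T = {}\<close> ESG EG endsS endsH
          by auto
        then show ?thesis using sd_le conS AS by blast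
      next
        case False
        then obtain v where v: "v \<in> verts S" "v \<notin> verts H" by auto
        obtain a where a: "a \<in> A" using Ane by auto
        have "(adj S)\<^sup>*\<^sup>* v a" using conn_reach[OF conS v(1)] a AS by auto
        moreover have "v \<noteq> a" using v a AH by auto
        ultimately obtain e where e: "e \<in> edges S" "v \<in> ends S e" using first_step by metis
        have "e \<in> edges H" using e \<open>edges S \<inter> edges T = {}\<close> ESG EG by auto
        then have "v \<in> verts H" using e endsS endsH wf_ends[OF wfH] by blast
        then show ?thesis using v by auto
      qed
    next
      case False
      then obtain e0 where e0: "e0 \<in> edges S" "e0 \<in> edges T" by auto
      obtain u0 w0 where uw: "u0 \<noteq> w0" "ends G e0 = {u0, w0}"
        using wf_ends2[OF wfS e0(1)] endsS e0 by metis
      define ST where "ST = \<lparr>verts = verts S, edges = edges S \<inter> edges T, ends = ends G\<rparr>"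
      define Cv where "Cv = {w. (adj ST)\<^sup>*\<^sup>* u0 w}"
      define CE where "CE = {f \<in> edges S \<inter> edges T. ends G f \<subseteq> Cv}"
      define Sm where "Sm = \<lparr>verts = verts S - (Cv - verts H), edges = edges S - CE, ends = ends G\<rparr>"
      define C where "C = \<lparr>verts = Cv, edges = CE, ends = ends G\<rparr>"
      have K1: "ends G f \<subseteq> Cv" if fw: "f \<in> edges S" "f \<in> edges T" "w \<in> ends G f" "w \<in> Cv" for f w
      proof -
        obtain p q where pq: "ends G f = {p, q}" using wf_ends2[OF wfS fw(1)] endsS fw(1) by metis
        have "adj ST p q" "adj ST q p" unfolding adj_def ST_def using fw pq by (auto simp: insert_commute)
        then show ?thesis using fw pq unfolding Cv_def
          by (auto intro: rtranclp.rtrancl_into_rtrancl)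
      qed
      have u0T: "u0 \<in> verts T" "u0 \<in> verts S"
        using uw e0 wf_ends[OF wfT e0(2)] wf_ends[OF wfS e0(1)] endsT endsS by auto
      have CvTS: "w \<in> verts T \<and> w \<in> verts S" if "w \<in> Cv" for w
      proof -
        have "(adj ST)\<^sup>*\<^sup>* u0 w" using that Cv_def by auto
        then show ?thesis
        proof (induction rule: rtranclp_induct)
          case base then show ?case using u0T by auto
        next
          case (step y z)
          then obtain f where f: "f \<in> edges S" "f \<in> edges T" "ends G f = {y, z}"
            unfolding adj_def ST_def by auto
          then show ?case using wf_ends[OF wfT f(2)] wf_ends[OF wfS f(1)] endsT endsS by auto
        qed
      qed
      have u0Cv: "u0 \<in> Cv" unfolding Cv_def by auto
      have e0CE: "e0 \<in> CE" unfolding CE_def using e0 K1[OF e0 _ u0Cv] uw by auto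
      have CES: "CE \<subseteq> edges S" unfolding CE_def by auto
      have wfSm: "wf_graph Sm"
        unfolding wf_graph_def
      proof (intro conjI ballI)
        show "finite (verts Sm)" "finite (edges Sm)" unfolding Sm_def using finS by auto
        fix f assume f: "f \<in> edges Sm"
        then have fS: "f \<in> edges S" "f \<notin> CE" unfolding Sm_def by auto
        obtain p q where pq: "p \<noteq> q" "p \<in> verts S" "q \<in> verts S" "ends S f = {p, q}"
          using wfS fS unfolding wf_graph_def by blast
        have "x \<notin> Cv - verts H" if "x \<in> ends G f" for x
        proof
          assume x: "x \<in> Cv - verts H"
          show False
          proof (cases "f \<in> edges T")
            case True
            then show False using K1[OF fS(1) True that] x fS unfolding CE_def by auto
          next
            case False
            then have "f \<in> edges H" using fS ESG EG by auto
            then show False using wf_ends[OF wfH] endsH x that by auto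
          qed
        qed
        then show "\<exists>u v. u \<noteq> v \<and> u \<in> verts Sm \<and> v \<in> verts Sm \<and> ends Sm f = {u, v}"
          using pq endsS fS unfolding Sm_def by (intro exI[of _ p] exI[of _ q]) auto
      qed
      have subSm: "subgraph Sm G" unfolding subgraph_def using wfSm subgraph_verts[OF subS] ESG
        unfolding Sm_def by auto
      have wfC: "wf_graph C"
        unfolding wf_graph_def
      proof (intro conjI ballI)
        show "finite (verts C)" using CvTS finS unfolding C_def by (auto intro: finite_subset)
        show "finite (edges C)" using CES finS unfolding C_def by (auto intro: finite_subset)
        fix f assume f: "f \<in> edges C"
        then have fS: "f \<in> edges S" "ends G f \<subseteq> Cv" unfolding C_def CE_def by auto
        then show "\<exists>u v. u \<noteq> v \<and> u \<in> verts C \<and> v \<in> verts C \<and> ends C f = {u, v}"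
          using wf_ends2[OF wfS fS(1)] endsS unfolding C_def by fastforce
      qed
      have subC: "subgraph C T" unfolding subgraph_def using wfC CvTS endsT
        unfolding C_def CE_def by auto
      have conC: "connected_graph C"
      proof -
        have r: "(adj C)\<^sup>*\<^sup>* u0 w" if "w \<in> Cv" for w
        proof -
          have "(adj ST)\<^sup>*\<^sup>* u0 w" using that Cv_def by auto
          then show ?thesis
          proof (induction rule: rtranclp_induct)
            case base then show ?case by simp
          next
            case (step y z)
            then obtain f where f: "f \<in> edges S" "f \<in> edges T" "ends G f = {y, z}"
              unfolding adj_def ST_def by auto
            have "y \<in> Cv" using step(1) Cv_def by auto
            then have "f \<in> CE" using K1[OF f(1,2)] f unfolding CE_def by auto
            then have "adj C y z" using f unfolding adj_def C_def by auto
            then show ?case using step(3) by auto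
          qed
        qed
        show ?thesis unfolding connected_graph_def
          using r unfolding C_def by (auto intro: rtranclp_trans reach_sym)
      qed
      have Aa: "\<exists>b\<in>Cv \<inter> verts H. (adj Sm)\<^sup>*\<^sup>* a b" if a: "a \<in> A" for a
      proof -
        have aH: "a \<in> verts H" using a AH by auto
        have "(adj S)\<^sup>*\<^sup>* a u0" using conn_reach[OF conS] a AS u0T by auto
        then have "(\<exists>b\<in>Cv \<inter> verts H. (adj Sm)\<^sup>*\<^sup>* a b) \<or> ((adj Sm)\<^sup>*\<^sup>* a u0 \<and> u0 \<notin> Cv)"
        proof (induction rule: rtranclp_induct)
          case base then show ?case using aH by auto
        next
          case (step y z)
          show ?case
          proof (cases "\<exists>b\<in>Cv \<inter> verts H. (adj Sm)\<^sup>*\<^sup>* a b")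
            case True then show ?thesis by auto
          next
            case False
            then have ry: "(adj Sm)\<^sup>*\<^sup>* a y" "y \<notin> Cv" using step(3) by auto
            obtain g where g: "g \<in> edges S" "ends S g = {y, z}" using step(2) unfolding adj_def by auto
            have gG: "ends G g = {y, z}" using g endsS by auto
            have "g \<notin> CE" using ry(2) gG unfolding CE_def by auto
            then have "adj Sm y z" using g gG unfolding adj_def Sm_def by auto
            then have rz: "(adj Sm)\<^sup>*\<^sup>* a z" using ry(1) by auto
            show ?thesis
            proof (cases "z \<in> Cv")
              case True
              have "z \<in> verts H"
              proof (cases "g \<in> edges T")
                case True
                then show ?thesis using K1[OF g(1) True _ \<open>z \<in> Cv\<close>] gG ry(2) by auto
              next
                case False
                then have "g \<in> edges H" using g ESG EG by auto
                then show ?thesis using wf_ends[OF wfH] endsH gG by (metis insert_subset)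
              qed
              then show ?thesis using True rz by auto
            next
              case False
              then show ?thesis using rz by auto
            qed
          qed
        qed
        then show ?thesis using u0Cv by auto
      qed
      obtain fb where fb: "\<And>a. a \<in> A \<Longrightarrow> fb a \<in> Cv \<inter> verts H \<and> (adj Sm)\<^sup>*\<^sup>* a (fb a)"
        using Aa by metis
      define B' where "B' = fb ` A"
      have finA: "finite A" using AH finH finite_subset by auto
      have "card B' \<le> card A" unfolding B'_def using finA card_image_le by auto
      then have cB: "card B' < card (leaves T)" using cardA by auto
      have B'L: "B' \<subseteq> leaves T" unfolding B'_def using fb CvTS VTH by blast
      have "B' \<subset> leaves T" using cB B'L by auto
      then have "sd H l B' \<le> sd T l B'" by (rule sct4)
      also have "sd T l B' \<le> ereal (glen l C)"
        using sd_le[OF subC conC, of B' l] fb unfolding B'_def C_def by (auto simp: image_subset_iff)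
      finally have sdB: "sd H l B' \<le> ereal (glen l C)" .
      then have "sd H l B' \<noteq> \<infinity>" by auto
      then obtain X where X: "subgraph X H" "connected_graph X" "B' \<subseteq> verts X" "sd H l B' = ereal (glen l X)"
        using sd_attained[OF wfH] by blast
      have glXC: "glen l X \<le> glen l C" using sdB X(4) by auto
      have wfX: "wf_graph X" using X(1) subgraph_wf by auto
      have EXH: "edges X \<subseteq> edges H" using X(1) subgraph_edges by auto
      have endsX: "\<And>e. e \<in> edges X \<Longrightarrow> ends X e = ends G e" using subgraph_ends[OF X(1)] endsH EXH by auto
      define U where "U = \<lparr>verts = verts Sm \<union> verts X, edges = edges Sm \<union> edges X, ends = ends G\<rparr>"
      have wfU: "wf_graph U"
        unfolding wf_graph_def
      proof (intro conjI ballI)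
        show "finite (verts U)" "finite (edges U)" using wfSm wfX unfolding U_def wf_graph_def by auto
        fix f assume "f \<in> edges U"
        then have "f \<in> edges Sm \<or> f \<in> edges X" unfolding U_def by auto
        then show "\<exists>u v. u \<noteq> v \<and> u \<in> verts U \<and> v \<in> verts U \<and> ends U f = {u, v}"
        proof
          assume f: "f \<in> edges Sm"
          then show ?thesis using wfSm unfolding wf_graph_def U_def Sm_def by fastforce
        next
          assume f: "f \<in> edges X"
          then show ?thesis using wfX endsX[OF f] unfolding wf_graph_def U_def by fastforce
        qed
      qed
      have subU: "subgraph U G" unfolding subgraph_def using wfU subgraph_verts[OF subSm]
          subgraph_verts[OF X(1)] VG subgraph_edges[OF subSm] EXH EG unfolding U_def by auto
      obtain a0 where a0: "a0 \<in> A" using Ane by auto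
      have a0U: "a0 \<in> verts U" using a0 AS AH unfolding U_def Sm_def by auto
      have SmU: "(adj Sm)\<^sup>*\<^sup>* x y \<Longrightarrow> (adj U)\<^sup>*\<^sup>* x y" for x y
        by (rule reach_mono) (auto simp: U_def Sm_def)
      have XU: "(adj X)\<^sup>*\<^sup>* x y \<Longrightarrow> (adj U)\<^sup>*\<^sup>* x y" for x y
        by (rule reach_mono) (auto simp: U_def endsX)
      define S' where "S' = gcomp U a0"
      have AS': "A \<subseteq> verts S'"
      proof
        fix a assume a: "a \<in> A"
        have "(adj U)\<^sup>*\<^sup>* a (fb a)" using fb[OF a] SmU by auto
        moreover have "(adj U)\<^sup>*\<^sup>* (fb a) (fb a0)"
          using XU conn_reach[OF X(2)] X(3) a a0 unfolding B'_def by (meson image_subset_iff)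
        moreover have "(adj U)\<^sup>*\<^sup>* (fb a0) a0" using fb[OF a0] SmU reach_sym by metis
        ultimately have "(adj U)\<^sup>*\<^sup>* a0 a" by (meson reach_sym rtranclp_trans)
        moreover have "a \<in> verts U" using a AS AH unfolding U_def Sm_def by auto
        ultimately show "a \<in> verts S'" using comp_props(3)[OF wfU a0U] S'_def by auto
      qed
      have subS'U: "subgraph S' U" and conS': "connected_graph S'"
        using comp_props[OF wfU a0U] S'_def by auto
      have subS': "subgraph S' G" using subgraph_trans[OF subS'U subU] .
      have "edges S' \<inter> edges T \<subseteq> edges S \<inter> edges T - {e0}"
        using subgraph_edges[OF subS'U] EXH ETH e0CE unfolding U_def Sm_def by auto
      then have "edges S' \<inter> edges T \<subset> edges S \<inter> edges T" using e0 by auto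
      then have "card (edges S' \<inter> edges T) < card (edges S \<inter> edges T)"
        using finS by (meson finite_Int psubset_card_mono)
      then have IH: "sd H l A \<le> ereal (glen l S')"
        using less.hyps subS' conS' AS' G_def by auto
      have "glen l S' \<le> glen l U"
        using subgraph_edges[OF subS'U] wfU lpos subgraph_edges[OF subU]
        by (intro glen_mono) (auto simp: wf_graph_def intro: less_imp_le)
      also have "glen l U \<le> glen l Sm + glen l X"
      proof -
        have fE: "finite (edges Sm)" "finite (edges X)" using wfSm wfX unfolding wf_graph_def by auto
        have "glen l U = sum l (edges Sm) + sum l (edges X) - sum l (edges Sm \<inter> edges X)"
          unfolding glen_def U_def using sum_Un[OF fE] by simp
        moreover have "0 \<le> sum l (edges Sm \<inter> edges X)"
          using lpos subgraph_edges[OF subSm] by (intro sum_nonneg) (auto intro: less_imp_le)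
        ultimately show ?thesis unfolding glen_def by simp
      qed
      also have "\<dots> \<le> glen l Sm + glen l C" using glXC by simp
      also have "\<dots> = glen l S"
        unfolding glen_def Sm_def C_def using sum.subset_diff[OF CES finS(1), of l] by simp
      finally show ?thesis using IH by (meson ereal_less_eq(3) order_trans)
    qed
  qed
qed

lemma forward:
  assumes Hk: "in_Hk k H" and st: "shortcut_tree T H l"
  shows "card (leaves T) \<le> k"
proof (rule ccontr)
  assume "\<not> card (leaves T) \<le> k"
  then have kL: "k < card (leaves T)" by simp
  define G where "G = graph_union T H"
  have wfT: "wf_graph T" and wfH: "wf_graph H" and lfG: "length_fun G l" and conT: "connected_graph T"
    and VTH: "verts T \<inter> verts H = leaves T" and ETH: "edges T \<inter> edges H = {}"
    and sct3: "ereal (glen l T) < sd H l (leaves T)"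
    using st unfolding shortcut_tree_def is_tree_def G_def by auto
  have wfG: "wf_graph G"
    using wfT wfH ETH unfolding wf_graph_def G_def gu_simps by fastforce
  have subH: "subgraph H G" using wfH ETH unfolding subgraph_def G_def gu_simps by auto
  have subT: "subgraph T G" using wfT unfolding subgraph_def G_def gu_simps by auto
  have kg: "k_geodesic k H G l"
    unfolding k_geodesic_def
  proof (intro allI impI)
    fix A assume A: "A \<subseteq> verts H \<and> card A \<le> k"
    have "sd H l A \<le> sd G l A"
      by (rule sd_ge) (use key_forward[OF st _, of A] A kL G_def in auto)
    then show "sd H l A = sd G l A" using sd_mono[OF subH] by (simp add: order_antisym)
  qed
  then have "fully_geodesic H G l" using Hk wfG subH lfG unfolding in_Hk_def by auto
  then have "sd H l (leaves T) = sd G l (leaves T)" using VTH unfolding fully_geodesic_def by auto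
  moreover have "sd G l (leaves T) \<le> ereal (glen l T)"
    using sd_le[OF subT conT] unfolding leaves_def by auto
  ultimately show False using sct3 by auto
qed

lemma delete_edge_simps: "verts (delete_edge S e) = verts S" "edges (delete_edge S e) = edges S - {e}"
  "ends (delete_edge S e) = ends S"
  unfolding delete_edge_def by auto

lemma delete_edge_conn:
  assumes "ends S e = {u, v}" "(adj (delete_edge S e))\<^sup>*\<^sup>* u v" "(adj S)\<^sup>*\<^sup>* x y"
  shows "(adj (delete_edge S e))\<^sup>*\<^sup>* x y"
  using assms(3)
proof (induction rule: rtranclp_induct)
  case base then show ?case by simp
next
  case (step y z)
  then obtain f where f: "f \<in> edges S" "ends S f = {y, z}" unfolding adj_def by auto
  show ?case
  proof (cases "f = e")
    case True
    then have "(y = u \<and> z = v) \<or> (y = v \<and> z = u)" using f assms(1) by (auto simp: doubleton_eq_iff)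
    then have "(adj (delete_edge S e))\<^sup>*\<^sup>* y z" using assms(2) reach_sym by metis
    then show ?thesis using step(3) by auto
  next
    case False
    then have "adj (delete_edge S e) y z" using f unfolding adj_def delete_edge_simps by auto
    then show ?thesis using step(3) by auto
  qed
qed

lemma leaf_conn:
  assumes wf: "wf_graph S" and e: "e \<in> edges S" "ends S e = {v, w}"
    and uniq: "\<And>f. f \<in> edges S \<Longrightarrow> v \<in> ends S f \<Longrightarrow> f = e"
    and r: "(adj S)\<^sup>*\<^sup>* x y" and xv: "x \<noteq> v"
  shows "(y \<noteq> v \<longrightarrow> (adj \<lparr>verts = verts S - {v}, edges = edges S - {e}, ends = ends S\<rparr>)\<^sup>*\<^sup>* x y) \<and>
         (y = v \<longrightarrow> (adj \<lparr>verts = verts S - {v}, edges = edges S - {e}, ends = ends S\<rparr>)\<^sup>*\<^sup>* x w)"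
  using r
proof (induction rule: rtranclp_induct)
  case base then show ?case using xv by simp
next
  case (step y z)
  let ?S = "\<lparr>verts = verts S - {v}, edges = edges S - {e}, ends = ends S\<rparr>"
  obtain f where f: "f \<in> edges S" "ends S f = {y, z}" using step(2) unfolding adj_def by auto
  have yz: "y \<noteq> z" using wf_ends2[OF wf f(1)] f(2) by (auto simp: doubleton_eq_iff)
  show ?case
  proof (cases "z = v")
    case True
    then have "f = e" using uniq f by auto
    then have "y = w" using f e True yz by (auto simp: doubleton_eq_iff)
    then show ?thesis using step(3) True yz by auto
  next
    case False
    show ?thesis
    proof (cases "y = v")
      case True
      then have "f = e" using uniq f by auto
      then have "z = w" using f e True yz by (auto simp: doubleton_eq_iff)
      then show ?thesis using step(3) True False by auto
    next
      case False
      then have "f \<noteq> e" using e f \<open>z \<noteq> v\<close> by auto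
      then have "adj ?S y z" using f unfolding adj_def by auto
      then show ?thesis using step(3) False \<open>z \<noteq> v\<close> by auto
    qed
  qed
qed

lemma fresh_inj:
  assumes "finite X" "finite Y" "infinite (UNIV :: 'b set)"
  shows "\<exists>f :: 'a \<Rightarrow> 'b. inj_on f X \<and> f ` X \<inter> Y = {}"
proof -
  have inf: "infinite (UNIV - Y)" using assms(2,3) by (simp add: Diff_infinite_finite)
  obtain Z where Z: "finite Z" "card Z = card X" "Z \<subseteq> UNIV - Y"
    using infinite_arbitrarily_large[OF inf, of "card X"] by blast
  then obtain f where "bij_betw f X Z" using finite_same_card_bij[OF assms(1) Z(1) Z(2)[symmetric]] by blast
  then show ?thesis using Z unfolding bij_betw_def by auto
qed



lemma construct:
  fixes G H S :: "('v, 'e) mgraph" and l :: "'e \<Rightarrow> real" and A :: "'v set"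
  assumes wfG: "wf_graph G" and subH: "subgraph H G" and lf: "length_fun G l" and wfH: "wf_graph H"
    and AH: "A \<subseteq> verts H" and cA: "2 \<le> card A"
    and subS: "subgraph S G" and conS: "connected_graph S" and AS: "A \<subseteq> verts S"
    and acycS: "acyclic_graph S"
    and noleaf: "\<And>v. v \<in> verts S \<Longrightarrow> v \<notin> A \<Longrightarrow> degree S v \<noteq> 1"
    and lt: "ereal (glen l S) < sd H l A"
    and subB: "\<And>B. B \<subset> A \<Longrightarrow> sd H l B \<le> sd G l B"
    and infV: "infinite (UNIV :: 'v set)" and infE: "infinite (UNIV :: 'e set)"
  shows "\<exists>T l'. shortcut_tree T H l' \<and> leaves T = A"
proof -
  have wfS: "wf_graph S" using subS subgraph_wf by auto
  have finVS: "finite (verts S)" and finES: "finite (edges S)" using wfS unfolding wf_graph_def by auto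
  have finVG: "finite (verts G)" and finEG: "finite (edges G)" using wfG unfolding wf_graph_def by auto
  have finA: "finite A" using AS finVS finite_subset by auto
  have Ane: "A \<noteq> {}" using cA by auto
  have VSG: "verts S \<subseteq> verts G" using subS subgraph_verts by auto
  have ESG: "edges S \<subseteq> edges G" using subS subgraph_edges by auto
  have VHG: "verts H \<subseteq> verts G" using subH subgraph_verts by auto
  have EHG: "edges H \<subseteq> edges G" using subH subgraph_edges by auto
  have endsS: "\<And>e. e \<in> edges S \<Longrightarrow> ends S e = ends G e" by (rule subgraph_ends[OF subS])
  have lpos: "\<And>e. e \<in> edges G \<Longrightarrow> 0 < l e" using lf unfolding length_fun_def by auto
  have deg0: "degree S v \<noteq> 0" if v: "v \<in> verts S" for v
  proof -
    have "\<not> A \<subseteq> {v}" using cA card_mono[of "{v}" A] by auto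
    then obtain w where w: "w \<in> A" "w \<noteq> v" by auto
    have "(adj S)\<^sup>*\<^sup>* v w" using conn_reach[OF conS v] w AS by auto
    then obtain e where "e \<in> edges S" "v \<in> ends S e" using first_step w(2) by metis
    moreover have "finite {e \<in> edges S. v \<in> ends S e}" using finES by auto
    ultimately show ?thesis unfolding degree_def by auto
  qed
  obtain cv :: "'v \<Rightarrow> 'v" where cv: "inj_on cv (verts S)" "cv ` verts S \<inter> verts G = {}"
    using fresh_inj[OF finVS finVG infV] by blast
  have finP: "finite (edges S <+> A)" using finES finA by auto
  obtain g :: "'e + 'v \<Rightarrow> 'e" where g: "inj_on g (edges S <+> A)" "g ` (edges S <+> A) \<inter> edges G = {}"
    using fresh_inj[OF finP finEG infE] by blast
  define ce where "ce = g \<circ> Inl"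
  define pe where "pe = g \<circ> Inr"
  have ce_inj: "inj_on ce (edges S)" using g(1) unfolding ce_def inj_on_def by auto
  have pe_inj: "inj_on pe A" using g(1) unfolding pe_def inj_on_def by auto
  have ce_pe: "\<And>e a. e \<in> edges S \<Longrightarrow> a \<in> A \<Longrightarrow> ce e \<noteq> pe a"
    using g(1) unfolding ce_def pe_def inj_on_def by fastforce
  have ce_fresh: "\<And>e. e \<in> edges S \<Longrightarrow> ce e \<notin> edges G" using g(2) unfolding ce_def by auto
  have pe_fresh: "\<And>a. a \<in> A \<Longrightarrow> pe a \<notin> edges G" using g(2) unfolding pe_def by auto
  have cv_fresh: "\<And>v. v \<in> verts S \<Longrightarrow> cv v \<notin> verts G" using cv(2) by auto
  have AG: "A \<subseteq> verts G" using AH VHG by auto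
  have cvA: "\<And>v. v \<in> verts S \<Longrightarrow> cv v \<notin> A" using cv_fresh AG by auto
  have acv: "\<And>a. a \<in> A \<Longrightarrow> a \<noteq> cv a" using cvA AS by (metis subsetD)
  have AcvS: "\<And>a. a \<in> A \<Longrightarrow> a \<notin> cv ` verts S" using cv_fresh AG by auto
  define T :: "('v, 'e) mgraph" where "T = \<lparr>verts = cv ` verts S \<union> A, edges = ce ` edges S \<union> pe ` A,
     ends = (\<lambda>x. if x \<in> ce ` edges S then cv ` ends S (the_inv_into (edges S) ce x)
                 else {the_inv_into A pe x, cv (the_inv_into A pe x)})\<rparr>"
  have VT: "verts T = cv ` verts S \<union> A" and ET: "edges T = ce ` edges S \<union> pe ` A"
    unfolding T_def by auto
  have endsT_ce: "\<And>e. e \<in> edges S \<Longrightarrow> ends T (ce e) = cv ` ends S e"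
    unfolding T_def using the_inv_into_f_f[OF ce_inj] by auto
  have pe_nce: "\<And>a. a \<in> A \<Longrightarrow> pe a \<notin> ce ` edges S" using ce_pe by force
  have endsT_pe: "\<And>a. a \<in> A \<Longrightarrow> ends T (pe a) = {a, cv a}"
    unfolding T_def using the_inv_into_f_f[OF pe_inj] pe_nce by simp
  define phi where "phi x = (if x \<in> cv ` verts S then the_inv_into (verts S) cv x else x)" for x
  have phi_cv: "\<And>v. v \<in> verts S \<Longrightarrow> phi (cv v) = v" unfolding phi_def using the_inv_into_f_f[OF cv(1)] by auto
  have phi_A: "\<And>a. a \<in> A \<Longrightarrow> phi a = a" unfolding phi_def using AcvS by auto
  have dbl: "{p, q} = {phi u, phi v}" if "{cv p, cv q} = {u, v}" "p \<in> verts S" "q \<in> verts S" for p q u v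
    using that phi_cv by (auto simp: doubleton_eq_iff)
  have adjST: "adj T (cv p) (cv q)" if pq: "adj S p q" for p q
  proof -
    obtain e where e: "e \<in> edges S" "ends S e = {p, q}" using pq unfolding adj_def by auto
    then show ?thesis unfolding adj_def using endsT_ce[OF e(1)] ET by (intro bexI[of _ "ce e"]) auto
  qed
  have adjTA: "adj T (cv a) a" if "a \<in> A" for a
    unfolding adj_def using endsT_pe[OF that] ET that by (intro bexI[of _ "pe a"]) auto
  have ET_cases: "P" if "x \<in> edges T" "\<And>e. e \<in> edges S \<Longrightarrow> x = ce e \<Longrightarrow> P"
    "\<And>a. a \<in> A \<Longrightarrow> x = pe a \<Longrightarrow> P" for x P
    using that ET by auto
  have wfT: "wf_graph T"
    unfolding wf_graph_def
  proof (intro conjI ballI)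
    show "finite (verts T)" "finite (edges T)" using VT ET finVS finES finA by auto
    fix x assume x: "x \<in> edges T"
    show "\<exists>u v. u \<noteq> v \<and> u \<in> verts T \<and> v \<in> verts T \<and> ends T x = {u, v}"
    proof (rule ET_cases[OF x])
      fix e assume e: "e \<in> edges S" "x = ce e"
      obtain p q where pq: "p \<noteq> q" "p \<in> verts S" "q \<in> verts S" "ends S e = {p, q}"
        using wfS e(1) unfolding wf_graph_def by blast
      have "cv p \<noteq> cv q" using pq cv(1) unfolding inj_on_def by auto
      then show ?thesis using pq endsT_ce[OF e(1)] e(2) VT by (intro exI[of _ "cv p"] exI[of _ "cv q"]) auto
    next
      fix a assume a: "a \<in> A" "x = pe a"
      have "a \<noteq> cv a" using acv a by auto
      then show ?thesis using a endsT_pe[OF a(1)] VT AS by (intro exI[of _ a] exI[of _ "cv a"]) auto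
    qed
  qed
  obtain a0 where a0: "a0 \<in> A" using Ane by auto
  have reachT: "(adj T)\<^sup>*\<^sup>* (cv a0) x" if x: "x \<in> verts T" for x
  proof -
    have rS: "(adj T)\<^sup>*\<^sup>* (cv a0) (cv v)" if v: "v \<in> verts S" for v
    proof -
      have "(adj S)\<^sup>*\<^sup>* a0 v" using conn_reach[OF conS] a0 AS v by auto
      then show ?thesis using reach_hom[of S cv T] adjST by blast
    qed
    show ?thesis
    proof (cases "x \<in> A")
      case True
      then show ?thesis using rS[of x] AS adjTA[OF True] by (meson rtranclp.rtrancl_into_rtrancl subsetD)
    next
      case False
      then show ?thesis using x VT rS by auto
    qed
  qed
  have conT: "connected_graph T"
    unfolding connected_graph_def using reachT by (meson reach_sym rtranclp_trans)
  have acycT: "acyclic_graph T"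
    unfolding acyclic_graph_def
  proof (intro ballI allI impI)
    fix x u v assume x: "x \<in> edges T" and uv: "ends T x = {u, v}"
    show "\<not> (adj (delete_edge T x))\<^sup>*\<^sup>* u v"
    proof (rule ET_cases[OF x])
      fix a assume a: "a \<in> A" "x = pe a"
      have stuck: "y = a" if r: "(adj (delete_edge T x))\<^sup>*\<^sup>* a y" for y
        using r
      proof (induction rule: rtranclp_induct)
        case base then show ?case by simp
      next
        case (step y z)
        then obtain f where f: "f \<in> edges T" "f \<noteq> x" "ends T f = {a, z}"
          unfolding adj_def delete_edge_simps by auto
        show ?case
        proof (rule ET_cases[OF f(1)])
          fix e assume e: "e \<in> edges S" "f = ce e"
          then have "a \<in> cv ` ends S e" using f(3) endsT_ce by auto
          then have "a \<in> cv ` verts S" using wf_ends[OF wfS e(1)] by blast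
          then show ?thesis using AcvS a by auto
        next
          fix a' assume a': "a' \<in> A" "f = pe a'"
          then have "a = a' \<or> a = cv a'" using f(3) endsT_pe by (auto simp: doubleton_eq_iff)
          then have "a = a'" using cvA a' AS a by (metis subsetD)
          then show ?thesis using a' a f(2) by auto
        qed
      qed
      have ne: "a \<noteq> cv a" using acv a by auto
      have "(u = a \<and> v = cv a) \<or> (u = cv a \<and> v = a)" using uv endsT_pe[OF a(1)] a(2)
        by (auto simp: doubleton_eq_iff)
      then show ?thesis using stuck ne reach_sym by metis
    next
      fix e assume e: "e \<in> edges S" "x = ce e"
      obtain p q where pq: "p \<noteq> q" "p \<in> verts S" "q \<in> verts S" "ends S e = {p, q}"
        using wfS e(1) unfolding wf_graph_def by blast
      have "{cv p, cv q} = {u, v}" using uv endsT_ce[OF e(1)] e(2) pq(4) by auto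
      then have pqphi: "{p, q} = {phi u, phi v}" using dbl[OF _ pq(2,3)] by blast
      have hom: "phi y = phi z \<or> adj (delete_edge S e) (phi y) (phi z)"
        if yz: "adj (delete_edge T x) y z" for y z
      proof -
        obtain f where f: "f \<in> edges T" "f \<noteq> x" "ends T f = {y, z}"
          using yz unfolding adj_def delete_edge_simps by auto
        show ?thesis
        proof (rule ET_cases[OF f(1)])
          fix e' assume e': "e' \<in> edges S" "f = ce e'"
          obtain p' q' where pq': "p' \<in> verts S" "q' \<in> verts S" "ends S e' = {p', q'}"
            using wfS e'(1) unfolding wf_graph_def by blast
          have "{cv p', cv q'} = {y, z}" using f(3) endsT_ce[OF e'(1)] e'(2) pq'(3) by auto
          then have "{p', q'} = {phi y, phi z}" using dbl[OF _ pq'(1,2)] by blast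
          moreover have "e' \<noteq> e" using f(2) e'(2) e(2) by auto
          ultimately have "adj (delete_edge S e) (phi y) (phi z)"
            unfolding adj_def delete_edge_simps using e'(1) pq'(3) by auto
          then show ?thesis by auto
        next
          fix a assume a: "a \<in> A" "f = pe a"
          then have "{y, z} = {a, cv a}" using f(3) endsT_pe by auto
          then have "phi y = a" "phi z = a" using phi_A phi_cv a AS by (auto simp: doubleton_eq_iff)
          then show ?thesis by auto
        qed
      qed
      show ?thesis
      proof
        assume "(adj (delete_edge T x))\<^sup>*\<^sup>* u v"
        then have "(adj (delete_edge S e))\<^sup>*\<^sup>* (phi u) (phi v)" using reach_hom[of "delete_edge T x" phi] hom by blast
        moreover have "ends S e = {phi u, phi v}" using pq(4) pqphi by auto
        ultimately show False using acycS e(1) unfolding acyclic_graph_def by blast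
      qed
    qed
  qed
  have degA: "degree T a = 1" if a: "a \<in> A" for a
  proof -
    have "{x \<in> edges T. a \<in> ends T x} = {pe a}"
    proof (intro equalityI subsetI)
      fix x assume x: "x \<in> {x \<in> edges T. a \<in> ends T x}"
      show "x \<in> {pe a}"
      proof (rule ET_cases[of x])
        fix e assume e: "e \<in> edges S" "x = ce e"
        then have "a \<in> cv ` ends S e" using x endsT_ce by auto
        then have "a \<in> cv ` verts S" using wf_ends[OF wfS e(1)] by blast
        then show ?thesis using AcvS a by auto
      next
        fix a' assume a': "a' \<in> A" "x = pe a'"
        then have "a = a' \<or> a = cv a'" using x endsT_pe by auto
        then show ?thesis using cvA a' AS a by (metis singletonI subsetD)
      qed (use x in auto)
    next
      fix x assume "x \<in> {pe a}"
      then show "x \<in> {x \<in> edges T. a \<in> ends T x}" using a ET endsT_pe by auto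
    qed
    then show ?thesis unfolding degree_def by simp
  qed
  have degcv: "degree T (cv v) \<noteq> 1" if v: "v \<in> verts S" for v
  proof -
    have eq: "{x \<in> edges T. cv v \<in> ends T x} = ce ` {e \<in> edges S. v \<in> ends S e} \<union> (if v \<in> A then {pe v} else {})"
    proof (intro equalityI subsetI)
      fix x assume x: "x \<in> {x \<in> edges T. cv v \<in> ends T x}"
      show "x \<in> ce ` {e \<in> edges S. v \<in> ends S e} \<union> (if v \<in> A then {pe v} else {})"
      proof (rule ET_cases[of x])
        fix e assume e: "e \<in> edges S" "x = ce e"
        then have "cv v \<in> cv ` ends S e" using x endsT_ce by auto
        then have "v \<in> ends S e" using wf_ends[OF wfS e(1)] v cv(1) by (meson inj_on_image_mem_iff)
        then show ?thesis using e by auto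
      next
        fix a assume a: "a \<in> A" "x = pe a"
        then have "cv v = a \<or> cv v = cv a" using x endsT_pe by auto
        then have "v = a" using cvA v a AS cv(1) unfolding inj_on_def by blast
        then show ?thesis using a by auto
      qed (use x in auto)
    next
      fix x assume x: "x \<in> ce ` {e \<in> edges S. v \<in> ends S e} \<union> (if v \<in> A then {pe v} else {})"
      then show "x \<in> {x \<in> edges T. cv v \<in> ends T x}"
        using ET endsT_ce endsT_pe by (auto split: if_splits)
    qed
    have fin: "finite (ce ` {e \<in> edges S. v \<in> ends S e})" using finES by auto
    have disj: "ce ` {e \<in> edges S. v \<in> ends S e} \<inter> (if v \<in> A then {pe v} else {}) = {}"
      using ce_pe by (auto, metis)
    have "card (ce ` {e \<in> edges S. v \<in> ends S e}) = degree S v"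
      unfolding degree_def by (rule card_image) (rule inj_on_subset[OF ce_inj], auto)
    then have "degree T (cv v) = degree S v + (if v \<in> A then 1 else 0)"
      unfolding degree_def eq using card_Un_disjoint[OF fin _ disj] by auto
    then show ?thesis using deg0[OF v] noleaf[OF v] by (auto split: if_splits)
  qed
  have leavesT: "leaves T = A"
    unfolding leaves_def using VT degA degcv by auto
  define D where "D = sd H l A"
  define eps where "eps = (if D = \<infinity> then 1 else (real_of_ereal D - glen l S) / (2 * real (card A)))"
  have cApos: "0 < real (card A)" using cA by auto
  have eps_pos: "0 < eps" and eps_bd: "ereal (glen l S + real (card A) * eps) < D"
  proof -
    have "0 < eps \<and> ereal (glen l S + real (card A) * eps) < D"
    proof (cases D)
      case (real d)
      then have "glen l S < d" using lt D_def by auto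
      moreover have e: "eps = (d - glen l S) / (2 * real (card A))" using real unfolding eps_def by auto
      ultimately have "0 < eps" using cApos by auto
      moreover have "real (card A) * eps = (d - glen l S) / 2" using e cApos by (simp add: field_simps)
      ultimately show ?thesis using real \<open>glen l S < d\<close> by auto
    next
      case PInf then show ?thesis unfolding eps_def by auto
    next
      case MInf then show ?thesis using lt D_def by auto
    qed
    then show "0 < eps" "ereal (glen l S + real (card A) * eps) < D" by auto
  qed
  define l' where "l' x = (if x \<in> ce ` edges S then l (the_inv_into (edges S) ce x)
      else if x \<in> pe ` A then eps else l x)" for x
  have l'_ce: "\<And>e. e \<in> edges S \<Longrightarrow> l' (ce e) = l e"
    unfolding l'_def using the_inv_into_f_f[OF ce_inj] by auto
  have l'_pe: "\<And>a. a \<in> A \<Longrightarrow> l' (pe a) = eps"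
    unfolding l'_def using pe_nce by auto
  have l'_G: "\<And>x. x \<in> edges G \<Longrightarrow> l' x = l x"
    unfolding l'_def using ce_fresh pe_fresh by auto
  have l'T_pos: "\<And>x. x \<in> edges T \<Longrightarrow> 0 < l' x"
    using ET l'_ce l'_pe lpos ESG eps_pos by auto
  have glenT: "glen l' T = glen l S + real (card A) * eps"
  proof -
    have disj: "ce ` edges S \<inter> pe ` A = {}" using ce_pe by blast
    have "glen l' T = sum l' (ce ` edges S) + sum l' (pe ` A)"
      unfolding glen_def ET using sum.union_disjoint[OF _ _ disj] finES finA by auto
    also have "sum l' (ce ` edges S) = sum l (edges S)"
      using sum.reindex[OF ce_inj, of l'] l'_ce by simp
    also have "sum l' (pe ` A) = real (card A) * eps"
      using sum.reindex[OF pe_inj, of l'] l'_pe by simp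
    finally show ?thesis unfolding glen_def by simp
  qed
  have sdH': "\<And>B. sd H l' B = sd H l B" using l'_G EHG by (intro sd_cong) auto
  have VTH: "verts T \<inter> verts H = leaves T"
    unfolding leavesT VT using cv_fresh VHG AH by auto
  have ETH: "edges T \<inter> edges H = {}"
    unfolding ET using ce_fresh pe_fresh EHG by auto
  have lfU: "length_fun (graph_union T H) l'"
    unfolding length_fun_def gu_simps using l'T_pos l'_G lpos EHG by auto
  have sct3: "ereal (glen l' T) < sd H l' (leaves T)"
    unfolding glenT leavesT sdH' using eps_bd D_def by auto
  have sct4: "sd H l' B \<le> sd T l' B" if B: "B \<subset> leaves T" for B
  proof -
    have BA: "B \<subset> A" using B leavesT by auto
    have "sd G l B \<le> sd T l' B"
    proof (rule sd_ge)
      fix R assume subR: "subgraph R T" and conR: "connected_graph R" and BR: "B \<subseteq> verts R"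
      have wfR: "wf_graph R" using subR subgraph_wf by auto
      have VRT: "verts R \<subseteq> verts T" and ERT: "edges R \<subseteq> edges T" using subgraph_verts[OF subR] subgraph_edges[OF subR] by auto
      have endsR: "\<And>f. f \<in> edges R \<Longrightarrow> ends R f = ends T f" by (rule subgraph_ends[OF subR])
      define R' :: "('v, 'e) mgraph" where "R' = \<lparr>verts = phi ` verts R, edges = {e \<in> edges S. ce e \<in> edges R}, ends = ends G\<rparr>"
      have cvR: "p \<in> phi ` verts R" if ep: "e \<in> edges S" "ce e \<in> edges R" "p \<in> ends S e" for e p
      proof -
        have "cv p \<in> ends R (ce e)" using ep endsR endsT_ce by auto
        then have "cv p \<in> verts R" using wf_ends[OF wfR ep(2)] by auto
        moreover have "p \<in> verts S" using wf_ends[OF wfS ep(1)] ep(3) by auto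
        ultimately show ?thesis using phi_cv by force
      qed
      have phiT: "phi ` verts T \<subseteq> verts G" using VT phi_cv phi_A VSG AG by auto
      have wfR': "wf_graph R'"
        unfolding wf_graph_def
      proof (intro conjI ballI)
        show "finite (verts R')" "finite (edges R')" using wfR finES unfolding R'_def wf_graph_def by auto
        fix e assume e: "e \<in> edges R'"
        then have e': "e \<in> edges S" "ce e \<in> edges R" unfolding R'_def by auto
        obtain p q where pq: "p \<noteq> q" "ends S e = {p, q}" using wf_ends2[OF wfS e'(1)] by blast
        then show "\<exists>u v. u \<noteq> v \<and> u \<in> verts R' \<and> v \<in> verts R' \<and> ends R' e = {u, v}"
          using cvR[OF e'] endsS[OF e'(1)] unfolding R'_def by (intro exI[of _ p] exI[of _ q]) auto
      qed
      have subR': "subgraph R' G"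
        unfolding subgraph_def using wfR' phiT VRT ESG unfolding R'_def by auto
      have hom: "phi x = phi y \<or> adj R' (phi x) (phi y)" if xy: "adj R x y" for x y
      proof -
        obtain f where f: "f \<in> edges R" "ends R f = {x, y}" using xy unfolding adj_def by auto
        have fT: "f \<in> edges T" "ends T f = {x, y}" using f ERT endsR by auto
        show ?thesis
        proof (rule ET_cases[OF fT(1)])
          fix e assume e: "e \<in> edges S" "f = ce e"
          obtain p q where pq: "p \<in> verts S" "q \<in> verts S" "ends S e = {p, q}"
            using wfS e(1) unfolding wf_graph_def by blast
          have "{cv p, cv q} = {x, y}" using fT(2) endsT_ce[OF e(1)] e(2) pq(3) by auto
          then have "{p, q} = {phi x, phi y}" using dbl[OF _ pq(1,2)] by blast
          then have "adj R' (phi x) (phi y)"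
            unfolding adj_def R'_def using e f(1) pq(3) endsS[OF e(1)] by auto
          then show ?thesis by auto
        next
          fix a assume a: "a \<in> A" "f = pe a"
          then have "{x, y} = {a, cv a}" using fT(2) endsT_pe by auto
          then have "phi x = a" "phi y = a" using phi_A phi_cv a AS by (auto simp: doubleton_eq_iff)
          then show ?thesis by auto
        qed
      qed
      have conR': "connected_graph R'"
        unfolding connected_graph_def
      proof (intro ballI)
        fix u v assume "u \<in> verts R'" "v \<in> verts R'"
        then obtain u0 v0 where "u0 \<in> verts R" "v0 \<in> verts R" "u = phi u0" "v = phi v0" unfolding R'_def by auto
        then show "(adj R')\<^sup>*\<^sup>* u v" using reach_hom[of R phi R'] hom conn_reach[OF conR] by blast
      qed
      have BR': "B \<subseteq> verts R'" using BR BA phi_A unfolding R'_def by force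
      have "glen l R' = sum l' (ce ` edges R')"
        unfolding glen_def using sum.reindex[OF inj_on_subset[OF ce_inj], of "edges R'" l'] l'_ce
        unfolding R'_def by auto
      also have "\<dots> \<le> glen l' R"
        unfolding glen_def using wfR ERT l'T_pos unfolding R'_def wf_graph_def
        by (intro sum_mono2) (auto intro: less_imp_le)
      finally have "glen l R' \<le> glen l' R" .
      then show "sd G l B \<le> ereal (glen l' R)" using sd_le[OF subR' conR' BR'] by (meson ereal_less_eq(3) order_trans)
    qed
    then show ?thesis using subB[OF BA] sdH' by (metis order_trans)
  qed
  have "shortcut_tree T H l'"
    unfolding shortcut_tree_def is_tree_def
    using wfT Ane VT conT acycT wfH lfU VTH ETH sct3 sct4 by auto
  then show ?thesis using leavesT by auto
qed

lemma backward:
  fixes H :: "('v, 'e) mgraph"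
  assumes k2: "k \<ge> 2" and wfH: "wf_graph H"
    and infV: "infinite (UNIV :: 'v set)" and infE: "infinite (UNIV :: 'e set)"
    and hyp: "\<forall>(T :: ('v, 'e) mgraph) (l :: 'e \<Rightarrow> real). shortcut_tree T H l \<longrightarrow> card (leaves T) \<le> k"
  shows "in_Hk k H"
  unfolding in_Hk_def
proof (intro allI impI)
  fix G :: "('v, 'e) mgraph" and l :: "'e \<Rightarrow> real"
  assume asm: "wf_graph G \<and> subgraph H G \<and> length_fun G l \<and> k_geodesic k H G l"
  then have wfG: "wf_graph G" and subH: "subgraph H G" and lf: "length_fun G l" and kg: "k_geodesic k H G l"
    by auto
  show "fully_geodesic H G l"
  proof (rule ccontr)
    assume "\<not> fully_geodesic H G l"
    then obtain A0 where "A0 \<subseteq> verts H \<and> sd H l A0 \<noteq> sd G l A0" unfolding fully_geodesic_def by auto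
    then obtain A where PA: "A \<subseteq> verts H \<and> sd H l A \<noteq> sd G l A"
      and minA: "\<And>B. B \<subseteq> verts H \<and> sd H l B \<noteq> sd G l B \<Longrightarrow> card A \<le> card B"
      using ex_has_least_nat[of "\<lambda>A. A \<subseteq> verts H \<and> sd H l A \<noteq> sd G l A" A0 card] by metis
    have AH: "A \<subseteq> verts H" using PA by auto
    have finH: "finite (verts H)" using wfH unfolding wf_graph_def by auto
    have finA: "finite A" using AH finH finite_subset by auto
    have kA: "k < card A" using PA kg unfolding k_geodesic_def by (meson not_le)
    have "sd G l A \<le> sd H l A" using sd_mono[OF subH] .
    then have ltA: "sd G l A < sd H l A" using PA by auto
    have subB: "sd H l B \<le> sd G l B" if B: "B \<subset> A" for B
    proof -
      have "card B < card A" using psubset_card_mono[OF finA B] .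
      then have "sd H l B = sd G l B" using minA[of B] B AH by force
      then show ?thesis by simp
    qed
    have "sd G l A \<noteq> \<infinity>" using ltA by auto
    then obtain S where subS: "subgraph S G" and conS: "connected_graph S" and AS: "A \<subseteq> verts S"
      and sdS: "sd G l A = ereal (glen l S)"
      using sd_attained[OF wfG] by blast
    have minS: "glen l S \<le> glen l S'" if "subgraph S' G" "connected_graph S'" "A \<subseteq> verts S'" for S'
      using sd_le[OF that, of l] sdS by auto
    have wfS: "wf_graph S" using subS subgraph_wf by auto
    have finES: "finite (edges S)" using wfS unfolding wf_graph_def by auto
    have lpos: "\<And>e. e \<in> edges G \<Longrightarrow> 0 < l e" using lf unfolding length_fun_def by auto
    have ESG: "edges S \<subseteq> edges G" using subgraph_edges[OF subS] .
    have endsS: "\<And>e. e \<in> edges S \<Longrightarrow> ends S e = ends G e" by (rule subgraph_ends[OF subS])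
    have acycS: "acyclic_graph S"
      unfolding acyclic_graph_def
    proof (intro ballI allI impI notI)
      fix e u v assume e: "e \<in> edges S" and uv: "ends S e = {u, v}"
        and r: "(adj (delete_edge S e))\<^sup>*\<^sup>* u v"
      let ?S = "delete_edge S e"
      have sub': "subgraph ?S G"
        using subS wfS unfolding subgraph_def wf_graph_def delete_edge_simps by auto
      have con': "connected_graph ?S"
        using conS delete_edge_conn[OF uv r] unfolding connected_graph_def delete_edge_simps by auto
      have "glen l S = l e + glen l ?S"
        unfolding glen_def delete_edge_simps using sum.remove[OF finES e] by simp
      moreover have "0 < l e" using lpos ESG e by auto
      moreover have "glen l S \<le> glen l ?S" using minS[OF sub' con'] AS by (simp add: delete_edge_simps)
      ultimately show False by simp
    qed
    have noleaf: "degree S v \<noteq> 1" if v: "v \<in> verts S" "v \<notin> A" for v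
    proof
      assume "degree S v = 1"
      then obtain e where eset: "{f \<in> edges S. v \<in> ends S f} = {e}"
        unfolding degree_def by (meson card_1_singletonE)
      then have e: "e \<in> edges S" "v \<in> ends S e" by auto
      have uniq: "\<And>f. f \<in> edges S \<Longrightarrow> v \<in> ends S f \<Longrightarrow> f = e" using eset by auto
      obtain w where w: "ends S e = {v, w}" using wf_ends2[OF wfS e(1)] e(2) by (metis insert_commute insertE singletonD)
      let ?S = "\<lparr>verts = verts S - {v}, edges = edges S - {e}, ends = ends S\<rparr>"
      have wf': "wf_graph ?S"
        unfolding wf_graph_def
      proof (intro conjI ballI)
        show "finite (verts ?S)" "finite (edges ?S)" using wfS unfolding wf_graph_def by auto
        fix f assume f: "f \<in> edges ?S"
        then have f': "f \<in> edges S" "f \<noteq> e" by auto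
        then have "v \<notin> ends S f" using uniq by auto
        then show "\<exists>p q. p \<noteq> q \<and> p \<in> verts ?S \<and> q \<in> verts ?S \<and> ends ?S f = {p, q}"
          using wfS f'(1) unfolding wf_graph_def by fastforce
      qed
      have sub': "subgraph ?S G"
        using wf' subS unfolding subgraph_def by auto
      have con': "connected_graph ?S"
        unfolding connected_graph_def
      proof (intro ballI)
        fix x y assume xy: "x \<in> verts ?S" "y \<in> verts ?S"
        then have "(adj S)\<^sup>*\<^sup>* x y" using conn_reach[OF conS] by auto
        then show "(adj ?S)\<^sup>*\<^sup>* x y" using leaf_conn[OF wfS e(1) w uniq] xy by auto
      qed
      have "glen l S = l e + glen l ?S"
        unfolding glen_def using sum.remove[OF finES e(1)] by simp
      moreover have "0 < l e" using lpos ESG e by auto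
      moreover have "glen l S \<le> glen l ?S" using minS[OF sub' con'] AS v by auto
      ultimately show False by simp
    qed
    have lt: "ereal (glen l S) < sd H l A" using ltA sdS by simp
    obtain T l' where "shortcut_tree T H l'" "leaves T = A"
      using construct[OF wfG subH lf wfH AH _ subS conS AS acycS noleaf lt subB infV infE] kA k2 by force
    then show False using hyp kA by force
  qed
qed


theorem proposition6p2:
  fixes k :: nat and H :: "('v, 'e) mgraph"
  assumes "k \<ge> 2"
    and "wf_graph H"
    and "infinite (UNIV :: 'v set)" and "infinite (UNIV :: 'e set)"
  shows "in_Hk k H \<longleftrightarrow>
    (\<forall>(T :: ('v, 'e) mgraph) (l :: 'e \<Rightarrow> real). shortcut_tree T H l \<longrightarrow> card (leaves T) \<le> k)"
proof
  assume "in_Hk k H"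
  then show "\<forall>(T :: ('v, 'e) mgraph) (l :: 'e \<Rightarrow> real). shortcut_tree T H l \<longrightarrow> card (leaves T) \<le> k"
    using forward by blast
next
  assume "\<forall>(T :: ('v, 'e) mgraph) (l :: 'e \<Rightarrow> real). shortcut_tree T H l \<longrightarrow> card (leaves T) \<le> k"
  then show "in_Hk k H" using backward[OF assms] by blast
qed

end
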